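(* Let $T$ be a string and $T'$ be obtained from $T$ by a single character edit (insertion, substitution, or deletion). Let $\mathcal{N}_2=\big((\mathsf{M}(T')\setminus\mathsf{M}(T))\setminus\{T'\}\big)\cap\mathsf{LeftM}(T)$ and $\mathcal{Q}=(\mathsf{M}(T')\cap\mathsf{M}(T))\setminus\{T'\}$. Then $$\sum_{x\in\mathcal{N}_2\cup\mathcal{Q}}\mathsf{D}_{T'}(x)\le 3\,\mathsf{size}(T)+2 .$$
   Context: Strings are over an alphabet $\Sigma$; $\mathrm{Substr}(T)$, $\mathrm{Prefix}(T)$, $\mathrm{Suffix}(T)$ are the sets of substrings, prefixes, suffixes of $T$. A string $w\in\mathrm{Substr}(T)$ is left-maximal in $T$ if $w\in\mathrm{Prefix}(T)$ or there exist distinct $a,b\in\Sigma$ with $aw,bw\in\mathrm{Substr}(T)$; right-maximal if $w\in\mathrm{Suffix}(T)$ or there exist distinct $a,b$ with $wa,wb\in\mathrm{Substr}(T)$. $\mathsf{LeftM}(T)$, $\mathsf{RightM}(T)$ denote these sets and $\mathsf{M}(T)=\mathsf{LeftM}(T)\cap\mathsf{RightM}(T)$. For a string $x$, $\mathsf{D}_T(x)=|\{a\in\Sigma: xa\in\mathrm{Substr}(T)\}|$, and $\mathsf{size}(T)=\sum_{x\in\mathsf{M}(T)}\mathsf{D}_T(x)$ (number of edges of the CDAWG of $T$). A single character edit means: insertion of one character at some position, substitution of one character by a different one, or deletion of one character. *)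

theory Defs
  imports Main "HOL-Library.Sublist"
begin

definition Substr :: "'a list \<Rightarrow> 'a list set" where
  "Substr T = {w. sublist w T}"

definition Prefixes :: "'a list \<Rightarrow> 'a list set" where
  "Prefixes T = {w. prefix w T}"

definition Suffixes :: "'a list \<Rightarrow> 'a list set" where
  "Suffixes T = {w. suffix w T}"

definition LeftM :: "'a list \<Rightarrow> 'a list set" where
  "LeftM T = {w \<in> Substr T. w \<in> Prefixes T \<or>
      (\<exists>a b. a \<noteq> b \<and> a # w \<in> Substr T \<and> b # w \<in> Substr T)}"

definition RightM :: "'a list \<Rightarrow> 'a list set" where
  "RightM T = {w \<in> Substr T. w \<in> Suffixes T \<or>
      (\<exists>a b. a \<noteq> b \<and> w @ [a] \<in> Substr T \<and> w @ [b] \<in> Substr T)}"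

definition MaxRep :: "'a list \<Rightarrow> 'a list set" where
  "MaxRep T = LeftM T \<inter> RightM T"

definition Dout :: "'a list \<Rightarrow> 'a list \<Rightarrow> nat" where
  "Dout T x = card {a. x @ [a] \<in> Substr T}"

definition cdawg_size :: "'a list \<Rightarrow> nat" where
  "cdawg_size T = (\<Sum>x\<in>MaxRep T. Dout T x)"

definition single_edit :: "'a list \<Rightarrow> 'a list \<Rightarrow> bool" where
  "single_edit T T' \<longleftrightarrow> (\<exists>u v c.
      (T = u @ v \<and> T' = u @ c # v) \<or>
      (\<exists>d. d \<noteq> c \<and> T = u @ d # v \<and> T' = u @ c # v) \<or>
      (T = u @ c # v \<and> T' = u @ v))"

end

theory Submission
  imports Defs
begin


lemma finite_Substr: "finite (Substr T)"
  unfolding Substr_def set_sublists_eq[symmetric] by (rule List.finite_set)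

lemma Substr_trans: "sublist a b \<Longrightarrow> b \<in> Substr T \<Longrightarrow> a \<in> Substr T"
  unfolding Substr_def using sublist_order.order_trans by blast

lemma LeftM_Substr: "LeftM T \<subseteq> Substr T"
  unfolding LeftM_def by auto

lemma MaxRep_Substr: "MaxRep T \<subseteq> Substr T"
  unfolding MaxRep_def LeftM_def by auto

lemma finite_MaxRep: "finite (MaxRep T)"
  using finite_Substr MaxRep_Substr finite_subset by blast

lemma LeftM_prefix:
  assumes "x \<in> LeftM T" "prefix s x"
  shows "s \<in> LeftM T"
proof -
  have sub: "x \<in> Substr T" using assms(1) LeftM_Substr by blast
  have s_sub: "s \<in> Substr T" using Substr_trans[OF prefix_imp_sublist[OF assms(2)] sub] .
  from assms(1) consider "x \<in> Prefixes T" | a b where "a \<noteq> b" "a # x \<in> Substr T" "b # x \<in> Substr T"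
    unfolding LeftM_def by blast
  then show ?thesis
  proof cases
    case 1
    then have "s \<in> Prefixes T" using assms(2) unfolding Prefixes_def using prefix_order.order_trans by blast
    then show ?thesis using s_sub unfolding LeftM_def by blast
  next
    case 2
    have "prefix (a # s) (a # x)" "prefix (b # s) (b # x)" using assms(2) by auto
    then have "a # s \<in> Substr T" "b # s \<in> Substr T"
      using 2 Substr_trans prefix_imp_sublist by blast+
    then show ?thesis using 2(1) s_sub unfolding LeftM_def by blast
  qed
qed

lemma finite_ext: "finite {a. x @ [a] \<in> Substr T}"
proof -
  have "{a. x @ [a] \<in> Substr T} \<subseteq> set T"
    unfolding Substr_def using set_mono_sublist by fastforce
  then show ?thesis using finite_subset by blast
qed

lemma Dout_le_1:
  assumes "x \<notin> RightM T" "x \<in> Substr T"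
  shows "Dout T x \<le> 1"
proof (rule ccontr)
  assume "\<not> Dout T x \<le> 1"
  then have "2 \<le> card {a. x @ [a] \<in> Substr T}" unfolding Dout_def by simp
  then have "\<not> card {a. x @ [a] \<in> Substr T} \<le> Suc 0" by simp
  then obtain a b where "a \<in> {a. x @ [a] \<in> Substr T}" "b \<in> {a. x @ [a] \<in> Substr T}" "a \<noteq> b"
    using card_le_Suc0_iff_eq[OF finite_ext] by blast
  then show False using assms unfolding RightM_def by blast
qed

lemma SubstrI: "T = ps @ w @ ss \<Longrightarrow> w \<in> Substr T"
  unfolding Substr_def by auto

lemma Dout_pos:
  assumes "y \<in> MaxRep T" "y \<noteq> T"
  shows "1 \<le> Dout T y"
proof -
  have ex: "\<exists>a. y @ [a] \<in> Substr T"
  proof -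
    from assms(1) consider "y \<in> Prefixes T" | a b where "a \<noteq> b" "a # y \<in> Substr T" "b # y \<in> Substr T"
      unfolding MaxRep_def LeftM_def by blast
    then show ?thesis
    proof cases
      case 1
      then obtain t where t: "T = y @ t" unfolding Prefixes_def prefix_def by blast
      with assms(2) obtain c t' where "t = c # t'" by (cases t) auto
      then have "T = [] @ (y @ [c]) @ t'" using t by simp
      then show ?thesis using SubstrI by blast
    next
      case 2
      obtain p1 s1 where h1: "T = p1 @ (a # y) @ s1" using 2(2) unfolding Substr_def sublist_def by blast
      obtain p2 s2 where h2: "T = p2 @ (b # y) @ s2" using 2(3) unfolding Substr_def sublist_def by blast
      show ?thesis
      proof (cases s1)
        case Nil
        show ?thesis
        proof (cases s2)
          case Nil
          with h1 h2 \<open>s1 = []\<close> have e: "p1 @ (a # y) = p2 @ (b # y)" by simp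
          then have "length (p1 @ (a # y)) = length (p2 @ (b # y))" by simp
          then have "length p1 = length p2" by simp
          with e have "a # y = b # y" by simp
          with 2(1) show ?thesis by simp
        next
          case (Cons c s2')
          then have "T = (p2 @ [b]) @ (y @ [c]) @ s2'" using h2 by simp
          then show ?thesis using SubstrI by blast
        qed
      next
        case (Cons c s1')
        then have "T = (p1 @ [a]) @ (y @ [c]) @ s1'" using h1 by simp
        then show ?thesis using SubstrI by blast
      qed
    qed
  qed
  then obtain a where "a \<in> {a. y @ [a] \<in> Substr T}" by blast
  then have "card {a. y @ [a] \<in> Substr T} \<noteq> 0" using finite_ext[of y T] by (simp add: card_eq_0_iff) blast
  then show ?thesis unfolding Dout_def by simp
qed

lemma card_MaxRep_le: "card (MaxRep T) \<le> cdawg_size T + 1"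
proof -
  have "card (MaxRep T - {T}) = (\<Sum>y\<in>MaxRep T - {T}. 1)" by simp
  also have "\<dots> \<le> (\<Sum>y\<in>MaxRep T - {T}. Dout T y)"
    by (rule sum_mono) (use Dout_pos in auto)
  also have "\<dots> \<le> (\<Sum>y\<in>MaxRep T. Dout T y)"
    by (rule sum_mono2) (use finite_MaxRep in auto)
  finally have "card (MaxRep T - {T}) \<le> cdawg_size T" unfolding cdawg_size_def .
  moreover have "card (MaxRep T) \<le> card (MaxRep T - {T}) + 1"
  proof -
    have "card (MaxRep T) \<le> card ((MaxRep T - {T}) \<union> {T})"
      by (rule card_mono) (use finite_MaxRep in auto)
    also have "\<dots> \<le> card (MaxRep T - {T}) + card {T}" by (rule card_Un_le)
    finally show ?thesis by simp
  qed
  ultimately show ?thesis by linarith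
qed



lemma not_RightM:
  assumes "w \<in> Substr T" "w \<notin> RightM T"
  shows "w \<notin> Suffixes T" "\<And>a b. w @ [a] \<in> Substr T \<Longrightarrow> w @ [b] \<in> Substr T \<Longrightarrow> a = b"
  using assms unfolding RightM_def by blast+

lemma propagate_LeftM:
  assumes L: "w \<in> LeftM T" and R: "w \<notin> RightM T" and b: "w @ [b] \<in> Substr T"
  shows "w @ [b] \<in> LeftM T"
proof -
  have wS: "w \<in> Substr T" using L LeftM_Substr by blast
  note nR = not_RightM[OF wS R]
  from L consider "w \<in> Prefixes T" | a a' where "a \<noteq> a'" "a # w \<in> Substr T" "a' # w \<in> Substr T"
    unfolding LeftM_def by blast
  then show ?thesis
  proof cases
    case 1
    then obtain t where t: "T = w @ t" unfolding Prefixes_def prefix_def by blast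
    show ?thesis
    proof (cases t)
      case Nil
      then have "w \<in> Suffixes T" using t unfolding Suffixes_def by simp
      with nR(1) show ?thesis by blast
    next
      case (Cons c t')
      then have T2: "T = [] @ (w @ [c]) @ t'" using t by simp
      then have "w @ [c] \<in> Substr T" by (rule SubstrI)
      with nR(2) b have "c = b" by blast
      with T2 have "w @ [b] \<in> Prefixes T" unfolding Prefixes_def by simp
      with b show ?thesis unfolding LeftM_def by blast
    qed
  next
    case 2
    have ext: "a0 # w @ [b] \<in> Substr T" if a0w: "a0 # w \<in> Substr T" for a0
    proof -
      obtain pre suf where h: "T = pre @ (a0 # w) @ suf" using a0w unfolding Substr_def sublist_def by blast
      show ?thesis
      proof (cases suf)
        case Nil
        then have "w \<in> Suffixes T" using h unfolding Suffixes_def suffix_def by auto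
        with nR(1) show ?thesis by blast
      next
        case (Cons c suf')
        then have "T = (pre @ [a0]) @ (w @ [c]) @ suf'" using h by simp
        then have "w @ [c] \<in> Substr T" by (rule SubstrI)
        with nR(2) b have "c = b" by blast
        then have "T = pre @ (a0 # w @ [b]) @ suf'" using h Cons by simp
        then show ?thesis by (rule SubstrI)
      qed
    qed
    have "a # (w @ [b]) \<in> Substr T" "a' # (w @ [b]) \<in> Substr T" using ext 2 by auto
    with 2(1) b show ?thesis unfolding LeftM_def by blast
  qed
qed

definition rclos :: "'a list \<Rightarrow> 'a list \<Rightarrow> 'a list \<Rightarrow> nat" where
  "rclos T s r = (LEAST m. s @ take m r \<in> RightM T)"

locale occ_setup =
  fixes T g s r :: "'a list"
  assumes T_eq: "T = g @ s @ r"
begin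

lemma sr_Substr: "s @ take m r \<in> Substr T"
proof -
  have "T = g @ (s @ take m r) @ drop m r" using T_eq by simp
  then show ?thesis by (rule SubstrI)
qed

lemma ex_RightM: "s @ take (length r) r \<in> RightM T"
proof -
  have "T = g @ (s @ r)" using T_eq by simp
  then have "s @ r \<in> Suffixes T" unfolding Suffixes_def suffix_def by blast
  then show ?thesis using sr_Substr[of "length r"] unfolding RightM_def by simp
qed

abbreviation "m0 \<equiv> rclos T s r"

lemma m0_RightM: "s @ take m0 r \<in> RightM T"
  unfolding rclos_def by (rule LeastI[of "\<lambda>m. s @ take m r \<in> RightM T", OF ex_RightM])

lemma m0_le: "m0 \<le> length r"
  unfolding rclos_def by (rule Least_le[of "\<lambda>m. s @ take m r \<in> RightM T", OF ex_RightM])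

lemma below_m0: "m < m0 \<Longrightarrow> s @ take m r \<notin> RightM T"
  unfolding rclos_def by (rule not_less_Least)

lemma take_Suc_r: "m < length r \<Longrightarrow> take (Suc m) r = take m r @ [r ! m]"
  by (simp add: take_Suc_conv_app_nth)

lemma LeftM_upto:
  assumes "s \<in> LeftM T"
  shows "m \<le> m0 \<Longrightarrow> s @ take m r \<in> LeftM T"
proof (induction m)
  case 0
  then show ?case using assms by simp
next
  case (Suc m)
  then have lt: "m < m0" by simp
  have "s @ take m r \<in> LeftM T" using Suc lt by simp
  moreover have "s @ take m r \<notin> RightM T" using below_m0[OF lt] .
  moreover have "(s @ take m r) @ [r ! m] \<in> Substr T"
    using sr_Substr[of "Suc m"] take_Suc_r[of m] lt m0_le by simp
  ultimately have "(s @ take m r) @ [r ! m] \<in> LeftM T" by (rule propagate_LeftM)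
  then show ?case using take_Suc_r[of m] lt m0_le by simp
qed

lemma closure_MaxRep:
  assumes "s \<in> LeftM T"
  shows "s @ take m0 r \<in> MaxRep T"
  using LeftM_upto[OF assms le_refl] m0_RightM unfolding MaxRep_def by blast

lemma occ_follow:
  "m \<le> m0 \<Longrightarrow> T = pre @ s @ suf \<Longrightarrow> prefix (take m r) suf"
proof (induction m arbitrary: pre suf)
  case 0
  then show ?case by simp
next
  case (Suc m)
  then have lt: "m < m0" by simp
  have lr: "m < length r" using lt m0_le by simp
  from Suc.IH[OF _ Suc.prems(2)] lt obtain suf' where suf: "suf = take m r @ suf'"
    unfolding prefix_def by auto
  let ?t = "s @ take m r"
  have tS: "?t \<in> Substr T" by (rule sr_Substr)
  note nR = not_RightM[OF tS below_m0[OF lt]]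
  have T2: "T = pre @ ?t @ suf'" using Suc.prems(2) suf by simp
  show ?case
  proof (cases suf')
    case Nil
    then have "T = pre @ ?t" using T2 by simp
    then have "?t \<in> Suffixes T" unfolding Suffixes_def suffix_def by blast
    with nR(1) show ?thesis by blast
  next
    case (Cons c suf'')
    then have "T = pre @ (?t @ [c]) @ suf''" using T2 by simp
    then have "?t @ [c] \<in> Substr T" by (rule SubstrI)
    moreover have "?t @ [r ! m] \<in> Substr T"
      using sr_Substr[of "Suc m"] take_Suc_r[OF lr] by simp
    ultimately have "c = r ! m" using nR(2) by blast
    then show ?thesis using suf Cons take_Suc_r[OF lr] by simp
  qed
qed

end

lemma closure_inj:
  assumes T: "T = u @ r" and j: "j1 \<le> length u" "j2 < j1"
    and eq: "drop j1 u @ take (rclos T (drop j1 u) r) r = drop j2 u @ take (rclos T (drop j2 u) r) r"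
  shows False
proof -
  define s1 where "s1 = drop j1 u"
  define s2 where "s2 = drop j2 u"
  define w where "w = take (j1 - j2) (drop j2 u)"
  have "drop j1 u = drop (j1 - j2) (drop j2 u)" using j by (simp add: drop_drop)
  then have s2w: "s2 = w @ s1" unfolding s1_def s2_def w_def by (metis append_take_drop_id)
  have wne: "w \<noteq> []" unfolding w_def using j by simp
  interpret O1: occ_setup T "take j1 u" s1 r unfolding s1_def using T by unfold_locales simp
  interpret O2: occ_setup T "take j2 u" s2 r unfolding s2_def using T by unfold_locales simp
  define y where "y = s1 @ take O1.m0 r"
  have y2: "y = w @ s1 @ take O2.m0 r" using eq s2w unfolding y_def s1_def s2_def by simp
  have far: "\<exists>pre suf. T = pre @ y @ suf \<and> n \<le> length pre" for n
  proof (induction n)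
    case 0
    have "T = take j1 u @ y @ drop O1.m0 r" unfolding y_def using O1.T_eq by simp
    then show ?case by blast
  next
    case (Suc n)
    then obtain pre suf where h: "T = pre @ y @ suf" "n \<le> length pre" by blast
    then have A: "T = (pre @ w) @ s1 @ (take O2.m0 r @ suf)" using y2 by simp
    then have "prefix (take O1.m0 r) (take O2.m0 r @ suf)"
      using O1.occ_follow[of O1.m0] by blast
    then obtain suf2 where e: "take O2.m0 r @ suf = take O1.m0 r @ suf2" unfolding prefix_def by blast
    have "(pre @ w) @ s1 @ (take O2.m0 r @ suf) = (pre @ w) @ s1 @ (take O1.m0 r @ suf2)"
      using e by simp
    with A have "T = (pre @ w) @ s1 @ (take O1.m0 r @ suf2)" by (rule trans)
    then have "T = (pre @ w) @ y @ suf2" unfolding y_def by simp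
    moreover have "Suc n \<le> length (pre @ w)" using h(2) wne by (cases w) auto
    ultimately show ?case by blast
  qed
  obtain pre suf where h: "T = pre @ y @ suf" "Suc (length T) \<le> length pre" using far by blast
  from h(1) have "length pre \<le> length T" by simp
  with h(2) show False by simp
qed

lemma card_LeftM_suffixes:
  assumes T: "T = u @ r"
  shows "card {j. j \<le> length u \<and> drop j u \<in> LeftM T} \<le> card (MaxRep T)"
proof -
  let ?f = "\<lambda>j. drop j u @ take (rclos T (drop j u) r) r"
  have inj: "inj_on ?f {j. j \<le> length u \<and> drop j u \<in> LeftM T}"
  proof (rule inj_onI)
    fix j1 j2 assume a: "j1 \<in> {j. j \<le> length u \<and> drop j u \<in> LeftM T}" "j2 \<in> {j. j \<le> length u \<and> drop j u \<in> LeftM T}"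
      "?f j1 = ?f j2"
    show "j1 = j2"
    proof (rule ccontr)
      assume "j1 \<noteq> j2"
      then consider "j2 < j1" | "j1 < j2" by linarith
      then show False
      proof cases
        case 1 then show False using closure_inj[OF T _ 1 a(3)] a(1) by simp
      next
        case 2 then show False using closure_inj[OF T _ 2 a(3)[symmetric]] a(2) by simp
      qed
    qed
  qed
  have img: "?f ` {j. j \<le> length u \<and> drop j u \<in> LeftM T} \<subseteq> MaxRep T"
  proof
    fix y assume "y \<in> ?f ` {j. j \<le> length u \<and> drop j u \<in> LeftM T}"
    then obtain j where j: "j \<le> length u" "drop j u \<in> LeftM T" "y = ?f j" by blast
    interpret O: occ_setup T "take j u" "drop j u" r using T by unfold_locales simp
    show "y \<in> MaxRep T" using O.closure_MaxRep[OF j(2)] j(3) by simp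
  qed
  show ?thesis using card_inj_on_le[OF inj img finite_MaxRep] .
qed



lemma edit_normal:
  assumes "single_edit T T'"
  obtains u w0 w v where "T = u @ w0 @ v" "T' = u @ w @ v" "length w \<le> 1"
proof -
  from assms obtain u v c where
    "(T = u @ v \<and> T' = u @ c # v) \<or> (\<exists>d. d \<noteq> c \<and> T = u @ d # v \<and> T' = u @ c # v) \<or> (T = u @ c # v \<and> T' = u @ v)"
    unfolding single_edit_def by blast
  then show ?thesis
  proof (elim disjE exE conjE)
    assume "T = u @ v" "T' = u @ c # v"
    then show ?thesis by (intro that[of u "[]" v "[c]"]) simp_all
  next
    fix d assume "T = u @ d # v" "T' = u @ c # v"
    then show ?thesis by (intro that[of u "[d]" v "[c]"]) simp_all
  next
    assume "T = u @ c # v" "T' = u @ v"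
    then show ?thesis by (intro that[of u "[c]" v "[]"]) simp_all
  qed
qed

lemma cross:
  assumes T: "T = u @ w0 @ v" and T': "T' = u @ w @ v" and w: "length w \<le> 1"
    and occ: "T' = pre @ z @ suf" and nz: "z \<notin> Substr T"
  shows "length pre \<le> length u" "length u < length pre + length z"
proof -
  show "length u < length pre + length z"
  proof (rule ccontr)
    assume "\<not> ?thesis"
    then have le: "length (pre @ z) \<le> length u" by simp
    have "take (length (pre @ z)) T' = pre @ z" using occ by simp
    moreover have "take (length (pre @ z)) T' = take (length (pre @ z)) u" using T' le by simp
    ultimately have e: "take (length (pre @ z)) u = pre @ z" using le by (simp add: min_def)
    have "u = take (length (pre @ z)) u @ drop (length (pre @ z)) u" by simp
    then have "u = (pre @ z) @ drop (length (pre @ z)) u" unfolding e .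
    then have "T = pre @ z @ (drop (length (pre @ z)) u @ w0 @ v)" using T by simp
    then have "z \<in> Substr T" by (rule SubstrI)
    with nz show False by simp
  qed
  show "length pre \<le> length u"
  proof (rule ccontr)
    assume "\<not> ?thesis"
    then have ge: "length (u @ w) \<le> length pre" using w by simp
    define k where "k = length pre - length (u @ w)"
    have "drop (length pre) T' = z @ suf" using occ by simp
    moreover have "drop (length pre) T' = drop k v" using T' ge unfolding k_def
      by (simp add: drop_append)
    ultimately have e: "drop k v = z @ suf" by simp
    have "v = take k v @ drop k v" by simp
    then have "v = take k v @ z @ suf" unfolding e .
    then have "T = (u @ w0 @ take k v) @ z @ suf" using T by simp
    then have "z \<in> Substr T" by (rule SubstrI)
    with nz show False by simp
  qed
qed


lemma cross_suffix:
  assumes T: "T = u @ w0 @ v" and T': "T' = u @ w @ v" and w: "length w \<le> 1"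
    and occ: "T' = pre @ z" and nz: "z \<notin> Suffixes T"
  shows "length pre \<le> length u"
proof (rule ccontr)
  assume "\<not> ?thesis"
  then have ge: "length (u @ w) \<le> length pre" using w by simp
  define k where "k = length pre - length (u @ w)"
  have "drop (length pre) T' = z" using occ by simp
  moreover have "drop (length pre) T' = drop k v" using T' ge unfolding k_def
    by (simp add: drop_append)
  ultimately have e: "drop k v = z" by simp
  have "v = take k v @ drop k v" by simp
  then have "T = (u @ w0 @ take k v) @ z" using T e by simp
  then have "z \<in> Suffixes T" unfolding Suffixes_def suffix_def by blast
  with nz show False by simp
qed

lemma prefix_of_drop:
  assumes "T' = u @ t" "T' = pre @ z @ suf" "length pre \<le> length u" "length u \<le> length pre + length z"
  shows "prefix (drop (length pre) u) z"
proof -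
  have "drop (length pre) T' = z @ suf" using assms(2) by simp
  moreover have "drop (length pre) T' = drop (length pre) u @ t" using assms(1,3) by simp
  ultimately have e: "drop (length pre) u @ t = z @ suf" by simp
  have "length (drop (length pre) u) \<le> length z" using assms(4) by simp
  then have "take (length (drop (length pre) u)) (z @ suf) = take (length (drop (length pre) u)) z" by simp
  moreover have "take (length (drop (length pre) u)) (drop (length pre) u @ t) = drop (length pre) u" by simp
  ultimately have "drop (length pre) u = take (length (drop (length pre) u)) z" using e assms(4) by simp
  then show ?thesis by (simp add: take_is_prefix)
qed

definition maxold :: "'a list \<Rightarrow> 'a list \<Rightarrow> nat \<Rightarrow> 'a list \<Rightarrow> bool" where
  "maxold T T' j x \<longleftrightarrow> prefix x (drop j T') \<and> x \<in> Substr T \<and>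
     (x = drop j T' \<or> take (Suc (length x)) (drop j T') \<notin> Substr T)"

lemma maxold_unique_aux:
  assumes "maxold T T' j x" "maxold T T' j x'" "length x \<le> length x'"
  shows "x = x'"
proof -
  have px: "prefix x (drop j T')" and px': "prefix x' (drop j T')" and sx': "x' \<in> Substr T"
    using assms unfolding maxold_def by auto
  have xx': "prefix x x'" using px px' assms(3) prefix_length_prefix by blast
  show ?thesis
  proof (rule ccontr)
    assume ne: "x \<noteq> x'"
    then have "strict_prefix x x'" using xx' by (simp add: strict_prefix_def)
    then have lt: "length x < length x'" by (rule prefix_length_less)
    have "x \<noteq> drop j T'"
    proof
      assume "x = drop j T'"
      with px' have "prefix x' x" by simp
      then have "length x' \<le> length x" by (rule prefix_length_le)
      with lt show False by simp
    qed
    then have nS: "take (Suc (length x)) (drop j T') \<notin> Substr T" using assms(1) unfolding maxold_def by blast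
    obtain rr where rr: "drop j T' = x' @ rr" using px' unfolding prefix_def by blast
    have "take (Suc (length x)) (drop j T') = take (Suc (length x)) x'"
      unfolding rr using lt by simp
    then have "prefix (take (Suc (length x)) (drop j T')) x'" by (simp add: take_is_prefix)
    then have "take (Suc (length x)) (drop j T') \<in> Substr T" using sx' Substr_trans prefix_imp_sublist by blast
    with nS show False by simp
  qed
qed

lemma maxold_unique:
  assumes a: "maxold T T' j x" and b: "maxold T T' j x'"
  shows "x = x'"
proof (cases "length x \<le> length x'")
  case True
  then show ?thesis using maxold_unique_aux[OF a b] by simp
next
  case False
  then have "length x' \<le> length x" by simp
  then show ?thesis using maxold_unique_aux[OF b a] by simp
qed


lemma wit_ext:
  assumes T: "T = u @ w0 @ v" and T': "T' = u @ w @ v" and wl: "length w \<le> 1"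
    and xL: "x \<in> LeftM T" and occ: "T' = pre @ (x @ [c]) @ suf" and nS: "x @ [c] \<notin> Substr T"
  shows "length pre \<le> length u" "drop (length pre) u \<in> LeftM T" "maxold T T' (length pre) x"
    "drop (length pre) T' ! length x = c"
proof -
  note cr = cross[OF T T' wl occ nS]
  show "length pre \<le> length u" using cr(1) .
  have occ2: "T' = pre @ x @ (c # suf)" using occ by simp
  have T'': "T' = u @ (w @ v)" using T' by simp
  have le2: "length u \<le> length pre + length x" using cr(2) by simp
  have "prefix (drop (length pre) u) x"
    by (rule prefix_of_drop[OF T'' occ2 cr(1) le2])
  then show "drop (length pre) u \<in> LeftM T" using LeftM_prefix[OF xL] by blast
  have d: "drop (length pre) T' = x @ c # suf" using occ2 by simp
  have xS: "x \<in> Substr T" using xL LeftM_Substr by blast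
  show "maxold T T' (length pre) x" unfolding maxold_def d using xS nS by simp
  show "drop (length pre) T' ! length x = c" unfolding d by simp
qed

lemma wit_suffix:
  assumes T: "T = u @ w0 @ v" and T': "T' = u @ w @ v" and wl: "length w \<le> 1"
    and xL: "x \<in> LeftM T" and occ: "T' = pre @ x" and nS: "x \<notin> Suffixes T"
  shows "length pre \<le> length u" "drop (length pre) u \<in> LeftM T" "maxold T T' (length pre) x"
proof -
  note cr = cross_suffix[OF T T' wl occ nS]
  show "length pre \<le> length u" using cr .
  have occ2: "T' = pre @ x @ []" using occ by simp
  have "length T' = length pre + length x" using occ by simp
  moreover have "length u \<le> length T'" using T' by simp
  ultimately have "length u \<le> length pre + length x" by simp
  then have le2: "length u \<le> length pre + length x" .
  have T'': "T' = u @ (w @ v)" using T' by simp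
  have "prefix (drop (length pre) u) x"
    by (rule prefix_of_drop[OF T'' occ2 cr le2])
  then show "drop (length pre) u \<in> LeftM T" using LeftM_prefix[OF xL] by blast
  have d: "drop (length pre) T' = x" using occ by simp
  have xS: "x \<in> Substr T" using xL LeftM_Substr by blast
  show "maxold T T' (length pre) x" unfolding maxold_def d using xS by simp
qed

theorem lemma12:
  fixes T T' :: "'a list"
  assumes "single_edit T T'"
  shows "(\<Sum>x \<in> (((MaxRep T' - MaxRep T) - {T'}) \<inter> LeftM T)
                 \<union> ((MaxRep T' \<inter> MaxRep T) - {T'}). Dout T' x)
         \<le> 3 * cdawg_size T + 2"
proof -
  obtain u w0 w v where T: "T = u @ w0 @ v" and T': "T' = u @ w @ v" and wl: "length w \<le> 1"
    by (rule edit_normal[OF assms])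
  define A where "A = {j. j \<le> length u \<and> drop j u \<in> LeftM T}"
  have "card A \<le> card (MaxRep T)"
    unfolding A_def by (rule card_LeftM_suffixes[of T u "w0 @ v"]) (simp add: T)
  then have cardA: "card A \<le> cdawg_size T + 1" using card_MaxRep_le[of T] by simp
  have "A \<subseteq> {..length u}" unfolding A_def by blast
  then have finA: "finite A" using finite_subset by blast
  define S1 where "S1 = (MaxRep T' \<inter> MaxRep T) - {T'}"
  define S2 where "S2 = ((MaxRep T' - MaxRep T) - {T'}) \<inter> LeftM T"
  define X where "X = S2 \<union> S1"
  have finS1: "finite S1" unfolding S1_def using finite_MaxRep by blast
  have finS2: "finite S2" unfolding S2_def using finite_MaxRep by blast
  have finX: "finite X" unfolding X_def using finS1 finS2 by blast
  have S1M: "S1 \<subseteq> MaxRep T" unfolding S1_def by blast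
  have XL: "X \<subseteq> LeftM T" unfolding X_def S1_def S2_def MaxRep_def by blast
  define E where "E x = {a. x @ [a] \<in> Substr T}" for x
  define E' where "E' x = {a. x @ [a] \<in> Substr T'}" for x
  have finE: "finite (E x)" "finite (E' x)" for x unfolding E_def E'_def by (rule finite_ext)+
  have D1: "Dout T' x \<le> card (E x) + card (E' x - E x)" for x
  proof -
    have "card (E' x) \<le> card (E x \<union> (E' x - E x))"
      by (rule card_mono) (use finE in auto)
    also have "\<dots> \<le> card (E x) + card (E' x - E x)" by (rule card_Un_le)
    finally show ?thesis unfolding Dout_def E'_def .
  qed
  have sumE: "(\<Sum>x\<in>X. card (E x)) \<le> cdawg_size T + card S2"
  proof -
    have disj: "S2 \<inter> S1 = {}" unfolding S1_def S2_def by blast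
    have "(\<Sum>x\<in>X. card (E x)) = (\<Sum>x\<in>S2. card (E x)) + (\<Sum>x\<in>S1. card (E x))"
      unfolding X_def by (rule sum.union_disjoint[OF finS2 finS1 disj])
    moreover have "(\<Sum>x\<in>S1. card (E x)) \<le> cdawg_size T"
    proof -
      have "(\<Sum>x\<in>S1. card (E x)) = (\<Sum>x\<in>S1. Dout T x)" unfolding E_def Dout_def by simp
      also have "\<dots> \<le> (\<Sum>x\<in>MaxRep T. Dout T x)" by (rule sum_mono2[OF finite_MaxRep S1M]) simp
      finally show ?thesis unfolding cdawg_size_def .
    qed
    moreover have "(\<Sum>x\<in>S2. card (E x)) \<le> card S2"
    proof -
      have "(\<Sum>x\<in>S2. card (E x)) \<le> (\<Sum>x\<in>S2. 1)"
      proof (rule sum_mono)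
        fix x assume x: "x \<in> S2"
        then have "x \<in> LeftM T" "x \<notin> MaxRep T" unfolding S2_def by auto
        then have "x \<notin> RightM T" "x \<in> Substr T" unfolding MaxRep_def using LeftM_Substr by auto
        then have "Dout T x \<le> 1" by (rule Dout_le_1)
        then show "card (E x) \<le> 1" unfolding E_def Dout_def .
      qed
      then show ?thesis by simp
    qed
    ultimately show ?thesis by linarith
  qed
  have cardS2: "card S2 \<le> card A"
  proof -
    have wit: "\<exists>j. j \<in> A \<and> maxold T T' j x" if x: "x \<in> S2" for x
    proof -
      have xL: "x \<in> LeftM T" and xM': "x \<in> MaxRep T'" and xnM: "x \<notin> MaxRep T"
        using x unfolding S2_def by auto
      have xS: "x \<in> Substr T" using xL LeftM_Substr by blast
      have xnR: "x \<notin> RightM T" using xL xnM unfolding MaxRep_def by blast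
      have xR': "x \<in> RightM T'" using xM' unfolding MaxRep_def by blast
      from xR' consider "x \<in> Suffixes T'" | a b where "a \<noteq> b" "x @ [a] \<in> Substr T'" "x @ [b] \<in> Substr T'"
        unfolding RightM_def by blast
      then show ?thesis
      proof cases
        case 1
        then obtain pre where occ: "T' = pre @ x" unfolding Suffixes_def suffix_def by blast
        have "x \<notin> Suffixes T" using xnR xS unfolding RightM_def by blast
        note ww = wit_suffix[OF T T' wl xL occ this]
        then show ?thesis unfolding A_def by blast
      next
        case 2
        have "\<not> (x @ [a] \<in> Substr T \<and> x @ [b] \<in> Substr T)"
          using xnR xS 2(1) unfolding RightM_def by blast
        then obtain c where c: "x @ [c] \<in> Substr T'" "x @ [c] \<notin> Substr T" using 2 by blast
        then obtain pre suf where occ: "T' = pre @ (x @ [c]) @ suf" unfolding Substr_def sublist_def by blast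
        note ww = wit_ext[OF T T' wl xL occ c(2)]
        then show ?thesis unfolding A_def by blast
      qed
    qed
    define f where "f x = (SOME j. j \<in> A \<and> maxold T T' j x)" for x
    have f: "f x \<in> A \<and> maxold T T' (f x) x" if "x \<in> S2" for x
      unfolding f_def using someI_ex[OF wit[OF that]] .
    have "inj_on f S2"
    proof (rule inj_onI)
      fix x y assume xy: "x \<in> S2" "y \<in> S2" "f x = f y"
      have "maxold T T' (f x) x" using f[OF xy(1)] by blast
      moreover have "maxold T T' (f x) y" using f[OF xy(2)] xy(3) by simp
      ultimately show "x = y" by (rule maxold_unique)
    qed
    moreover have "f ` S2 \<subseteq> A" using f by blast
    ultimately show ?thesis using card_inj_on_le finA by blast
  qed
  define P where "P = (SIGMA x:X. E' x - E x)"
  have sumP: "(\<Sum>x\<in>X. card (E' x - E x)) = card P"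
    unfolding P_def using finX finE by (simp add: card_SigmaI)
  have cardP: "card P \<le> card A"
  proof -
    have wit: "\<exists>j. j \<in> A \<and> maxold T T' j x \<and> drop j T' ! length x = c" if xc: "(x, c) \<in> P" for x c
    proof -
      have xX: "x \<in> X" and c1: "x @ [c] \<in> Substr T'" and c2: "x @ [c] \<notin> Substr T"
        using xc unfolding P_def E_def E'_def by auto
      have xL: "x \<in> LeftM T" using xX XL by blast
      obtain pre suf where occ: "T' = pre @ (x @ [c]) @ suf" using c1 unfolding Substr_def sublist_def by blast
      note ww = wit_ext[OF T T' wl xL occ c2]
      then show ?thesis unfolding A_def by blast
    qed
    define g where "g xc = (SOME j. j \<in> A \<and> maxold T T' j (fst xc) \<and> drop j T' ! length (fst xc) = snd xc)" for xc
    have g: "g xc \<in> A \<and> maxold T T' (g xc) (fst xc) \<and> drop (g xc) T' ! length (fst xc) = snd xc"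
      if "xc \<in> P" for xc
    proof -
      obtain x c where xc: "xc = (x, c)" by (cases xc) blast
      show ?thesis unfolding g_def xc fst_conv snd_conv using someI_ex[OF wit[OF that[unfolded xc]]] .
    qed
    have "inj_on g P"
    proof (rule inj_onI)
      fix p q assume pq: "p \<in> P" "q \<in> P" "g p = g q"
      have m1: "maxold T T' (g p) (fst p)" using g[OF pq(1)] by blast
      have m2: "maxold T T' (g p) (fst q)" using g[OF pq(2)] pq(3) by simp
      have "fst p = fst q" using maxold_unique[OF m1 m2] .
      moreover have "snd p = drop (g p) T' ! length (fst p)" using g[OF pq(1)] by simp
      moreover have "snd q = drop (g p) T' ! length (fst q)" using g[OF pq(2)] pq(3) by simp
      ultimately show "p = q" by (simp add: prod_eq_iff)
    qed
    moreover have "g ` P \<subseteq> A" using g by blast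
    ultimately show ?thesis using card_inj_on_le finA by blast
  qed
  have "(\<Sum>x\<in>X. Dout T' x) \<le> (\<Sum>x\<in>X. card (E x) + card (E' x - E x))"
    by (rule sum_mono) (rule D1)
  also have "\<dots> = (\<Sum>x\<in>X. card (E x)) + (\<Sum>x\<in>X. card (E' x - E x))"
    by (rule sum.distrib)
  also have "\<dots> \<le> (cdawg_size T + card S2) + card P" using sumE sumP by simp
  also have "\<dots> \<le> 3 * cdawg_size T + 2" using cardS2 cardP cardA by linarith
  finally show ?thesis unfolding X_def S1_def S2_def .
qed

end
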